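(* Let $g$ be an associative algebra equipped with a nondegenerate symmetric bilinear form $\langle\cdot,\cdot\rangle$ satisfying $\langle u v,w\rangle=\langle u,v w\rangle$. Let $n\ge1$ and $\mathbf{g}=g\oplus\cdots\oplus g$ ($n$ copies) with componentwise multiplication. Let $\mathbf{C},\mathbf{A}$ be linear operators on $\mathbf{g}$ written in components as $(\mathbf{C}(\mathbf{u}))_i=\sum_j C_{ij}(u_j)$, $(\mathbf{A}(\mathbf{u}))_i=\sum_j A_{ij}(u_j)$ with linear operators $C_{ij},A_{ij}$ on $g$. Then Hom$(\mathbf{C},\mathbf{A})$ holds on $\mathbf{g}$ if and only if: (1) Hom$(C_{ij},A_{jj})$ holds for all $1\le i,j\le n$; and (2) for all $1\le i,j,k\le n$ with $j<k$ and all $X,Y\in g$: $[C_{ij}(X),C_{ik}(Y)]=C_{ik}\big([A_{kj}(X),Y]\big)+C_{ij}\big([X,A_{jk}(Y)]\big)$.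
   Context: $[X,Y]=XY-YX$ (componentwise in $\mathbf{g}$). For linear operators $S,A$ on an associative algebra, Hom$(S,A)$ means $[S(X),S(Y)]=S\big([A(X),Y]+[X,A(Y)]\big)$ for all $X,Y$. *)

theory Defs
  imports Complex_Main
begin

definition com :: "'a::ring \<Rightarrow> 'a \<Rightarrow> 'a" where
  "com x y = x * y - y * x"

definition assoc_algebra :: "('k::field \<Rightarrow> 'a::ring \<Rightarrow> 'a) \<Rightarrow> bool" where
  "assoc_algebra scale \<longleftrightarrow> vector_space scale \<and>
     (\<forall>c x y. scale c (x * y) = scale c x * y \<and> scale c (x * y) = x * scale c y)"

definition nondeg_sym_invariant_form ::
  "('k::field \<Rightarrow> 'a::ring \<Rightarrow> 'a) \<Rightarrow> ('a \<Rightarrow> 'a \<Rightarrow> 'k) \<Rightarrow> bool" where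
  "nondeg_sym_invariant_form scale B \<longleftrightarrow>
     (\<forall>y. Vector_Spaces.linear scale (*) (\<lambda>x. B x y)) \<and>
     (\<forall>x. Vector_Spaces.linear scale (*) (\<lambda>y. B x y)) \<and>
     (\<forall>x y. B x y = B y x) \<and>
     (\<forall>x. (\<forall>y. B x y = 0) \<longrightarrow> x = 0) \<and>
     (\<forall>u v w. B (u * v) w = B u (v * w))"

definition Hom_on :: "'b set \<Rightarrow> ('b \<Rightarrow> 'b \<Rightarrow> 'b) \<Rightarrow> ('b \<Rightarrow> 'b \<Rightarrow> 'b) \<Rightarrow> ('b \<Rightarrow> 'b) \<Rightarrow> ('b \<Rightarrow> 'b) \<Rightarrow> bool" where
  "Hom_on V add br S A \<longleftrightarrow>
     (\<forall>X\<in>V. \<forall>Y\<in>V. br (S X) (S Y) = S (add (br (A X) Y) (br X (A Y))))"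

abbreviation Hom :: "('a::ring \<Rightarrow> 'a) \<Rightarrow> ('a \<Rightarrow> 'a) \<Rightarrow> bool" where
  "Hom S A \<equiv> Hom_on UNIV (+) com S A"

text \<open>The direct sum g^n, elements as functions nat => g supported on {..<n}.\<close>
definition gsum :: "nat \<Rightarrow> (nat \<Rightarrow> 'a::zero) set" where
  "gsum n = {u. \<forall>i\<ge>n. u i = 0}"

definition vadd :: "(nat \<Rightarrow> 'a::plus) \<Rightarrow> (nat \<Rightarrow> 'a) \<Rightarrow> nat \<Rightarrow> 'a" where
  "vadd u v = (\<lambda>i. u i + v i)"

definition vcom :: "(nat \<Rightarrow> 'a::ring) \<Rightarrow> (nat \<Rightarrow> 'a) \<Rightarrow> nat \<Rightarrow> 'a" where
  "vcom u v = (\<lambda>i. com (u i) (v i))"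

definition block_op :: "nat \<Rightarrow> (nat \<Rightarrow> nat \<Rightarrow> 'a \<Rightarrow> 'a::comm_monoid_add) \<Rightarrow> (nat \<Rightarrow> 'a) \<Rightarrow> nat \<Rightarrow> 'a" where
  "block_op n C u = (\<lambda>i. if i < n then (\<Sum>j<n. C i j (u j)) else 0)"

end

theory Submission
  imports Defs
begin

lemma linF: assumes "Vector_Spaces.linear s s (f::'a::ab_group_add\<Rightarrow>'a)"
  shows "f 0 = 0" "f (a+b) = f a + f b" "f (-a) = - f a" "f (sum g S) = (\<Sum>x\<in>S. f (g x))"
proof -
  interpret Vector_Spaces.linear s s f by fact
  show "f 0 = 0" "f (a+b) = f a + f b" "f (-a) = - f a" "f (sum g S) = (\<Sum>x\<in>S. f (g x))"
    by (simp_all add: add sum neg)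
qed

lemma com_sum_left: "com (sum f S) b = (\<Sum>x\<in>S. com (f x) b)"
  by (simp add: com_def sum_distrib_left sum_distrib_right sum_subtractf)
lemma com_sum_right: "com b (sum f S) = (\<Sum>x\<in>S. com b (f x))"
  by (simp add: com_def sum_distrib_left sum_distrib_right sum_subtractf)
lemma com_0[simp]: "com 0 b = 0" "com b 0 = 0" by (simp_all add: com_def)
lemma com_anti: "com a b = - com b a" by (simp add: com_def)

lemma sum_single:
  assumes "(j::nat) < n" "\<And>m. m < n \<Longrightarrow> m \<noteq> j \<Longrightarrow> f m = 0"
  shows "(\<Sum>m<n. f m) = f j"
proof -
  have "(\<Sum>m<n. f m) = f j + (\<Sum>m\<in>{..<n}-{j}. f m)"
    using assms(1) by (subst sum.remove[of _ j]) auto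
  also have "(\<Sum>m\<in>{..<n}-{j}. f m) = 0" using assms(2) by (intro sum.neutral) auto
  finally show ?thesis by simp
qed

lemma block_single:
  assumes lin: "\<And>i j. i < n \<Longrightarrow> j < n \<Longrightarrow> Vector_Spaces.linear scale scale (M i j)"
    and "m < n" "j < n"
  shows "block_op n M (\<lambda>p. if p = j then x else 0) m = M m j x"
  unfolding block_op_def using assms
  by (simp, subst sum_single[of j]) (auto simp: linF(1)[OF lin])

lemma key:
  fixes scale :: "'k::field \<Rightarrow> 'a::ring \<Rightarrow> 'a"
    and C A :: "nat \<Rightarrow> nat \<Rightarrow> 'a \<Rightarrow> 'a"
  assumes linC: "\<And>i j. i < n \<Longrightarrow> j < n \<Longrightarrow> Vector_Spaces.linear scale scale (C i j)"
    and linA: "\<And>i j. i < n \<Longrightarrow> j < n \<Longrightarrow> Vector_Spaces.linear scale scale (A i j)"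
  shows "Hom_on (gsum n) vadd vcom (block_op n C) (block_op n A) \<longleftrightarrow>
    (\<forall>i<n. \<forall>j<n. \<forall>k<n. \<forall>x y.
        com (C i j x) (C i k y) = C i k (com (A k j x) y) + C i j (com x (A j k y)))"
proof
  assume H: "Hom_on (gsum n) vadd vcom (block_op n C) (block_op n A)"
  show "\<forall>i<n. \<forall>j<n. \<forall>k<n. \<forall>x y.
        com (C i j x) (C i k y) = C i k (com (A k j x) y) + C i j (com x (A j k y))"
  proof (intro allI impI)
    fix i j k x y assume ijk: "i < n" "j < n" "k < n"
    define X where "X = (\<lambda>p. if p = j then x else (0::'a))"
    define Y where "Y = (\<lambda>p. if p = k then y else (0::'a))"
    have XG: "X \<in> gsum n" "Y \<in> gsum n" using ijk by (auto simp: gsum_def X_def Y_def)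
    have "vcom (block_op n C X) (block_op n C Y) =
       block_op n C (vadd (vcom (block_op n A X) Y) (vcom X (block_op n A Y)))"
      using H XG unfolding Hom_on_def by blast
    hence E: "vcom (block_op n C X) (block_op n C Y) i =
       block_op n C (vadd (vcom (block_op n A X) Y) (vcom X (block_op n A Y))) i" by simp
    have L: "vcom (block_op n C X) (block_op n C Y) i = com (C i j x) (C i k y)"
      unfolding vcom_def X_def Y_def using ijk by (simp add: block_single[OF linC])
    have "block_op n C (vadd (vcom (block_op n A X) Y) (vcom X (block_op n A Y))) i
      = (\<Sum>m<n. C i m (com (block_op n A X m) (Y m)) + C i m (com (X m) (block_op n A Y m)))"
      unfolding block_op_def[of n C] vadd_def vcom_def using ijk
      by (auto intro!: sum.cong simp: linF(2)[OF linC])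
    also have "\<dots> = (\<Sum>m<n. C i m (com (block_op n A X m) (Y m))) + (\<Sum>m<n. C i m (com (X m) (block_op n A Y m)))"
      by (rule sum.distrib)
    also have "(\<Sum>m<n. C i m (com (block_op n A X m) (Y m))) = C i k (com (A k j x) y)"
      using ijk by (subst sum_single[of k]) (auto simp: Y_def X_def block_single[OF linA] linF(1)[OF linC])
    also have "(\<Sum>m<n. C i m (com (X m) (block_op n A Y m))) = C i j (com x (A j k y))"
      using ijk by (subst sum_single[of j]) (auto simp: Y_def X_def block_single[OF linA] linF(1)[OF linC])
    finally show "com (C i j x) (C i k y) = C i k (com (A k j x) y) + C i j (com x (A j k y))"
      using E L by simp
  qed
next
  assume P: "\<forall>i<n. \<forall>j<n. \<forall>k<n. \<forall>x y.
        com (C i j x) (C i k y) = C i k (com (A k j x) y) + C i j (com x (A j k y))"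
  show "Hom_on (gsum n) vadd vcom (block_op n C) (block_op n A)"
    unfolding Hom_on_def
  proof (intro ballI ext)
    fix X Y :: "nat \<Rightarrow> 'a" and i :: nat
    show "vcom (block_op n C X) (block_op n C Y) i =
       block_op n C (vadd (vcom (block_op n A X) Y) (vcom X (block_op n A Y))) i"
    proof (cases "i < n")
      case False thus ?thesis by (simp add: vcom_def block_op_def)
    next
      case True
      have "vcom (block_op n C X) (block_op n C Y) i
          = (\<Sum>j<n. \<Sum>k<n. com (C i j (X j)) (C i k (Y k)))"
        using True by (simp add: vcom_def block_op_def com_sum_left com_sum_right) (rule sum.swap)
      also have "\<dots> = (\<Sum>j<n. \<Sum>k<n. C i k (com (A k j (X j)) (Y k)) + C i j (com (X j) (A j k (Y k))))"
        using True P by (intro sum.cong refl) auto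
      also have "\<dots> = (\<Sum>j<n. \<Sum>k<n. C i k (com (A k j (X j)) (Y k))) + (\<Sum>j<n. \<Sum>k<n. C i j (com (X j) (A j k (Y k))))"
        by (simp add: sum.distrib)
      also have "(\<Sum>j<n. \<Sum>k<n. C i k (com (A k j (X j)) (Y k))) = (\<Sum>k<n. C i k (com (block_op n A X k) (Y k)))"
        by (subst sum.swap) (auto intro!: sum.cong simp: block_op_def linF(4)[OF linC] True com_sum_left)
      also have "(\<Sum>j<n. \<Sum>k<n. C i j (com (X j) (A j k (Y k)))) = (\<Sum>j<n. C i j (com (X j) (block_op n A Y j)))"
        by (auto intro!: sum.cong simp: block_op_def linF(4)[OF linC] True com_sum_right)
      also have "(\<Sum>k<n. C i k (com (block_op n A X k) (Y k))) + (\<Sum>j<n. C i j (com (X j) (block_op n A Y j)))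
         = (\<Sum>m<n. C i m (com (block_op n A X m) (Y m) + com (X m) (block_op n A Y m)))"
        by (simp add: sum.distrib[symmetric] linF(2)[OF linC] True)
      also have "\<dots> = block_op n C (vadd (vcom (block_op n A X) Y) (vcom X (block_op n A Y))) i"
        using True by (simp add: block_op_def[of n C] vadd_def vcom_def)
      finally show ?thesis .
    qed
  qed
qed

theorem proposition4:
  fixes scale :: "'k::field \<Rightarrow> 'a::ring \<Rightarrow> 'a"
    and B :: "'a \<Rightarrow> 'a \<Rightarrow> 'k"
    and n :: nat
    and C A :: "nat \<Rightarrow> nat \<Rightarrow> 'a \<Rightarrow> 'a"
  assumes alg: "assoc_algebra scale"
    and form: "nondeg_sym_invariant_form scale B"
    and n: "n \<ge> 1"
    and linC: "\<And>i j. i < n \<Longrightarrow> j < n \<Longrightarrow> Vector_Spaces.linear scale scale (C i j)"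
    and linA: "\<And>i j. i < n \<Longrightarrow> j < n \<Longrightarrow> Vector_Spaces.linear scale scale (A i j)"
  shows "Hom_on (gsum n) vadd vcom (block_op n C) (block_op n A) \<longleftrightarrow>
    ((\<forall>i<n. \<forall>j<n. Hom (C i j) (A j j)) \<and>
     (\<forall>i<n. \<forall>j<n. \<forall>k<n. j < k \<longrightarrow> (\<forall>X Y.
        com (C i j X) (C i k Y) = C i k (com (A k j X) Y) + C i j (com X (A j k Y)))))"
proof -
  have R: "(\<forall>i<n. \<forall>j<n. \<forall>k<n. \<forall>x y.
        com (C i j x) (C i k y) = C i k (com (A k j x) y) + C i j (com x (A j k y))) \<longleftrightarrow>
    ((\<forall>i<n. \<forall>j<n. Hom (C i j) (A j j)) \<and>
     (\<forall>i<n. \<forall>j<n. \<forall>k<n. j < k \<longrightarrow> (\<forall>X Y.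
        com (C i j X) (C i k Y) = C i k (com (A k j X) Y) + C i j (com X (A j k Y)))))"
proof
  assume P: "\<forall>i<n. \<forall>j<n. \<forall>k<n. \<forall>x y.
        com (C i j x) (C i k y) = C i k (com (A k j x) y) + C i j (com x (A j k y))"
  have "\<forall>i<n. \<forall>j<n. Hom (C i j) (A j j)"
  proof (intro allI impI)
    fix i j assume ij: "i < n" "j < n"
    show "Hom (C i j) (A j j)"
      unfolding Hom_on_def using P ij by (auto simp: linF(2)[OF linC])
  qed
  moreover have "\<forall>i<n. \<forall>j<n. \<forall>k<n. j < k \<longrightarrow> (\<forall>X Y.
        com (C i j X) (C i k Y) = C i k (com (A k j X) Y) + C i j (com X (A j k Y)))"
    using P by blast
  ultimately show "(\<forall>i<n. \<forall>j<n. Hom (C i j) (A j j)) \<and>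
     (\<forall>i<n. \<forall>j<n. \<forall>k<n. j < k \<longrightarrow> (\<forall>X Y.
        com (C i j X) (C i k Y) = C i k (com (A k j X) Y) + C i j (com X (A j k Y))))" ..
next
  assume HP: "(\<forall>i<n. \<forall>j<n. Hom (C i j) (A j j)) \<and>
     (\<forall>i<n. \<forall>j<n. \<forall>k<n. j < k \<longrightarrow> (\<forall>X Y.
        com (C i j X) (C i k Y) = C i k (com (A k j X) Y) + C i j (com X (A j k Y))))"
  hence H: "\<forall>i<n. \<forall>j<n. Hom (C i j) (A j j)"
    and P: "\<forall>i<n. \<forall>j<n. \<forall>k<n. j < k \<longrightarrow> (\<forall>X Y.
        com (C i j X) (C i k Y) = C i k (com (A k j X) Y) + C i j (com X (A j k Y)))" by auto
  show "\<forall>i<n. \<forall>j<n. \<forall>k<n. \<forall>x y.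
        com (C i j x) (C i k y) = C i k (com (A k j x) y) + C i j (com x (A j k y))"
  proof (intro allI impI)
  fix i j k x y assume ijk: "i < n" "j < n" "k < n"
  consider "j < k" | "j = k" | "k < j" by arith
  then show "com (C i j x) (C i k y) = C i k (com (A k j x) y) + C i j (com x (A j k y))"
  proof cases
    case 1 thus ?thesis using P ijk by blast
  next
    case 2 thus ?thesis using H ijk unfolding Hom_on_def by (simp add: linF(2)[OF linC])
  next
    case 3
    have "com (C i k y) (C i j x) = C i j (com (A j k y) x) + C i k (com y (A k j x))"
      using P ijk 3 by blast
    hence "com (C i j x) (C i k y) = - (C i j (com (A j k y) x) + C i k (com y (A k j x)))"
      by (metis com_anti)
    also have "\<dots> = C i j (com x (A j k y)) + C i k (com (A k j x) y)"
      using ijk by (simp add: com_anti[of "A j k y"] com_anti[of y] linF(3)[OF linC])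
    finally show ?thesis by (simp add: add.commute)
  qed
  qed
qed
  show ?thesis using key[OF linC linA] R by simp
qed

end
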